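(* Let $p,q\in\mathbb{N}$, $a\in\{1,\dots,p\}$, $b\in\{1,\dots,q\}$ and $n\in\mathbb{N}_0$. Set \[ \mathscr N_{p,q,a,b}(n)\coloneq\frac{n+1-\bigl(\frac{2-a}{p}+\frac{2-b}{q}\bigr)}{\frac1p+\frac1q},\qquad d_{b,a}(N)\coloneq\left\lceil\frac{N+2-a}{p}\right\rceil+\left\lceil\frac{N+2-b}{q}\right\rceil-1 . \] (1) For every $N\in\mathbb{N}_0$ with $N\ge\mathscr N_{p,q,a,b}(n)$ one has $n\le d_{b,a}(N)$. (2) Consequently, let $T$ be a semi-infinite complex matrix with $T_{i,j}=0$ whenever $j<i-p$ or $j>i+q$, let $\nu\in\mathbb{C}^{p\times p}$, $\xi\in\mathbb{C}^{q\times q}$ be invertible lower triangular matrices, and let $u_a^\nu,u_b^\xi,e_a^\nu,e_b^\xi$ be as described in the context. Defining $m_{n,a,b}\coloneq u_b^\xi\,T^n\,u_a^\nu$, one has \[ (e_b^\xi)^\top\bigl(T^{[N]}\bigr)^n e_a^\nu=m_{n,a,b}\quad\text{for all } N\in\mathbb{N}_0 \text{ with } N\ge\mathscr N_{p,q,a,b}(n), \] so that $(e_b^\xi)^\top(T^{[N]})^n e_a^\nu$ is independent of $N$ for $N\ge\mathscr N_{p,q,a,b}(n)$.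
   Context: $T^{[N]}=(T_{i,j})_{0\le i,j\le N}$ is the principal truncation of size $N+1$. $u_a^\nu$ is the semi-infinite column vector whose entries with indices $0,\dots,p-1$ are those of $\nu^{-\top}e_a^{[p]}$ and whose other entries are $0$; $u_b^\xi$ is the semi-infinite row vector whose entries with indices $0,\dots,q-1$ are those of $(e_b^{[q]})^\top\xi^{-1}$ and whose other entries are $0$ ($e_a^{[p]}$, $e_b^{[q]}$ standard basis vectors). $e_a^\nu,e_b^\xi\in\mathbb{C}^{N+1}$ are the vectors of entries with indices $0,\dots,N$ of $u_a^\nu$ and $(u_b^\xi)^\top$. Powers of the banded semi-infinite matrix $T$ are ordinary matrix products (finite sums), with $T^0=I$. *)

theory Defs
  imports "HOL-Analysis.Analysis" "Jordan_Normal_Form.Matrix"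
begin

text \<open>Semi-infinite complex matrices are functions nat => nat => complex (indices from 0).\<close>

definition banded :: "nat \<Rightarrow> nat \<Rightarrow> (nat \<Rightarrow> nat \<Rightarrow> complex) \<Rightarrow> bool" where
  "banded p q T \<longleftrightarrow> (\<forall>i j. (j + p < i \<or> j > i + q) \<longrightarrow> T i j = 0)"

text \<open>Product of semi-infinite matrices (for banded matrices the sum is finite).\<close>
definition smat_mult :: "(nat \<Rightarrow> nat \<Rightarrow> complex) \<Rightarrow> (nat \<Rightarrow> nat \<Rightarrow> complex) \<Rightarrow> nat \<Rightarrow> nat \<Rightarrow> complex" where
  "smat_mult A B = (\<lambda>i j. \<Sum>\<^sub>\<infinity>l. A i l * B l j)"

primrec smat_pow :: "(nat \<Rightarrow> nat \<Rightarrow> complex) \<Rightarrow> nat \<Rightarrow> nat \<Rightarrow> nat \<Rightarrow> complex" where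
  "smat_pow T 0 = (\<lambda>i j. if i = j then 1 else 0)"
| "smat_pow T (Suc k) = smat_mult (smat_pow T k) T"

definition trunc :: "(nat \<Rightarrow> nat \<Rightarrow> complex) \<Rightarrow> nat \<Rightarrow> complex mat" where
  "trunc T N = mat (N + 1) (N + 1) (\<lambda>(i, j). T i j)"

definition lower_triangular_mat :: "'a::zero mat \<Rightarrow> bool" where
  "lower_triangular_mat A \<longleftrightarrow> (\<forall>i j. i < j \<longrightarrow> j < dim_col A \<longrightarrow> i < dim_row A \<longrightarrow> A $$ (i, j) = 0)"

definition the_inverse_mat :: "complex mat \<Rightarrow> complex mat" where
  "the_inverse_mat A = (SOME B. B \<in> carrier_mat (dim_row A) (dim_row A) \<and> inverts_mat A B \<and> inverts_mat B A)"

text \<open>u_a^nu: entries 0..p-1 are those of nu^{-T} e_a (a in 1..p, 1-based), zero elsewhere.\<close>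
definition u_col :: "nat \<Rightarrow> complex mat \<Rightarrow> nat \<Rightarrow> nat \<Rightarrow> complex" where
  "u_col p \<nu> a i = (if i < p then (transpose_mat (the_inverse_mat \<nu>) *\<^sub>v unit_vec p (a - 1)) $ i else 0)"

text \<open>u_b^xi: entries 0..q-1 are those of e_b^T xi^{-1} (b in 1..q, 1-based), zero elsewhere.\<close>
definition u_row :: "nat \<Rightarrow> complex mat \<Rightarrow> nat \<Rightarrow> nat \<Rightarrow> complex" where
  "u_row q \<xi> b j = (if j < q then the_inverse_mat \<xi> $$ (b - 1, j) else 0)"

text \<open>m_{n,a,b} = u_b^xi T^n u_a^nu (finite sums since u vectors have finite support).\<close>
definition moment :: "nat \<Rightarrow> nat \<Rightarrow> (nat \<Rightarrow> nat \<Rightarrow> complex) \<Rightarrow> complex mat \<Rightarrow> complex mat \<Rightarrow> nat \<Rightarrow> nat \<Rightarrow> nat \<Rightarrow> complex" where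
  "moment p q T \<nu> \<xi> n a b = (\<Sum>i<q. \<Sum>j<p. u_row q \<xi> b i * smat_pow T n i j * u_col p \<nu> a j)"

definition Nscr :: "nat \<Rightarrow> nat \<Rightarrow> nat \<Rightarrow> nat \<Rightarrow> nat \<Rightarrow> real" where
  "Nscr p q a b n = (real n + 1 - ((2 - real a) / real p + (2 - real b) / real q)) / (1 / real p + 1 / real q)"

definition dba :: "nat \<Rightarrow> nat \<Rightarrow> nat \<Rightarrow> nat \<Rightarrow> nat \<Rightarrow> int" where
  "dba p q b a N = \<lceil>(real N + 2 - real a) / real p\<rceil> + \<lceil>(real N + 2 - real b) / real q\<rceil> - 1"

end

theory Submission
  imports Defs "Jordan_Normal_Form.Determinant"
begin

lemma infsum_nat_bounded:
  fixes f :: "nat \<Rightarrow> complex"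
  assumes "\<And>l. l \<ge> K \<Longrightarrow> f l = 0"
  shows "infsum f UNIV = sum f {..<K}"
proof -
  have "infsum f UNIV = infsum f {..<K}"
    by (rule infsum_cong_neutral) (use assms in auto)
  then show ?thesis by simp
qed

lemma banded_nz:
  assumes "banded p q T" "T k j \<noteq> 0"
  shows "k \<le> j + p" "j \<le> k + q"
  using assms unfolding banded_def by (meson not_le)+

lemma smat_mult_band:
  assumes "banded p q T" "K > j + p"
  shows "smat_mult A T i j = (\<Sum>k<K. A i k * T k j)"
  unfolding smat_mult_def
proof (rule infsum_nat_bounded)
  fix l assume "l \<ge> K"
  then have "T l j = 0" using assms banded_nz(1)[OF assms(1), of l j] by fastforce
  then show "A i l * T l j = 0" by simp
qed

lemma pow_band:
  assumes "banded p q T"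
  shows "j > i + q * n \<or> i > j + p * n \<Longrightarrow> smat_pow T n i j = 0"
proof (induction n arbitrary: j)
  case 0
  then show ?case by auto
next
  case (Suc n)
  have "smat_pow T (Suc n) i j = (\<Sum>k<j+p+1. smat_pow T n i k * T k j)"
    unfolding smat_pow.simps(2) by (rule smat_mult_band[OF assms]) simp
  also have "\<dots> = 0"
  proof (rule sum.neutral, intro ballI)
    fix k assume "k \<in> {..<j+p+1}"
    show "smat_pow T n i k * T k j = 0"
    proof (cases "T k j = 0")
      case False
      note b = banded_nz[OF assms False]
      have "k > i + q * n \<or> i > k + p * n" using Suc.prems b by auto
      then show ?thesis using Suc.IH by simp
    qed simp
  qed
  finally show ?case .
qed

lemma trunc_carrier: "trunc T N \<in> carrier_mat (N+1) (N+1)"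
  unfolding trunc_def by simp

lemma trunc_pow_entry:
  assumes "banded p q T"
  shows "i \<le> N \<Longrightarrow> j \<le> N \<Longrightarrow> (\<forall>t\<le>n. i + q*t \<le> N \<or> j + p*(n-t) \<le> N) \<Longrightarrow>
    (trunc T N ^\<^sub>m n) $$ (i,j) = smat_pow T n i j"
proof (induction n arbitrary: j)
  case 0
  then show ?case by (simp add: trunc_def)
next
  case (Suc n)
  have C: "trunc T N ^\<^sub>m n \<in> carrier_mat (N+1) (N+1)" using trunc_carrier
    by (metis pow_mat_dim_square carrier_matI)
  have "(trunc T N ^\<^sub>m Suc n) $$ (i,j) = (\<Sum>k<N+1. (trunc T N ^\<^sub>m n) $$ (i,k) * T k j)"
    using Suc.prems C trunc_carrier[of T N]
    by (auto simp: scalar_prod_def trunc_def lessThan_atLeast0 intro!: sum.cong)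
  also have "\<dots> = (\<Sum>k<N+1. smat_pow T n i k * T k j)"
  proof (rule sum.cong[OF refl])
    fix k assume k: "k \<in> {..<N+1}"
    show "(trunc T N ^\<^sub>m n) $$ (i,k) * T k j = smat_pow T n i k * T k j"
    proof (cases "T k j = 0")
      case False
      note b = banded_nz[OF assms False]
      have "\<forall>t\<le>n. i + q*t \<le> N \<or> k + p*(n-t) \<le> N"
      proof (intro allI impI)
        fix t assume t: "t \<le> n"
        have e: "Suc n - t = Suc (n - t)" using t by simp
        have "k + p*(n-t) \<le> j + p*(Suc n - t)" unfolding e using b by simp
        then show "i + q*t \<le> N \<or> k + p*(n-t) \<le> N" using Suc.prems(3) t
          by (metis le_SucI order_trans)
      qed
      then show ?thesis using Suc.IH[of k] Suc.prems k by simp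
    qed simp
  qed
  also have "\<dots> = (\<Sum>k<N+j+p+2. smat_pow T n i k * T k j)"
  proof (rule sum.mono_neutral_left, simp, simp, intro ballI)
    fix k assume k: "k \<in> {..<N+j+p+2} - {..<N+1}"
    show "smat_pow T n i k * T k j = 0"
    proof (cases "T k j = 0")
      case False
      note b = banded_nz[OF assms False]
      have "i + q*n \<le> N \<or> j + p*(Suc n - n) \<le> N" using Suc.prems(3)[rule_format, of n] by simp
      then have "k > i + q * n" using k b by auto
      then show ?thesis using pow_band[OF assms] by simp
    qed simp
  qed
  also have "\<dots> = smat_pow T (Suc n) i j"
    unfolding smat_pow.simps(2) by (rule smat_mult_band[OF assms, symmetric]) simp
  finally show ?case .
qed


lemma inv_lower:
  assumes A: "A \<in> carrier_mat m m" and lt: "lower_triangular_mat A" and inv: "invertible_mat A"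
  shows "the_inverse_mat A \<in> carrier_mat m m \<and> A * the_inverse_mat A = 1\<^sub>m m
    \<and> (\<forall>i j. i < j \<longrightarrow> j < m \<longrightarrow> the_inverse_mat A $$ (i,j) = 0)"
proof -
  obtain B where B: "inverts_mat A B" "inverts_mat B A" using inv unfolding invertible_mat_def by blast
  have c: "dim_col B = m" using arg_cong[OF B(1)[unfolded inverts_mat_def], of dim_col] A by simp
  have r: "dim_row B = m" using arg_cong[OF B(2)[unfolded inverts_mat_def], of dim_col] A by simp
  have "B \<in> carrier_mat m m" using c r by auto
  then have ex: "\<exists>B. B \<in> carrier_mat (dim_row A) (dim_row A) \<and> inverts_mat A B \<and> inverts_mat B A"
    using B A by auto
  define C where "C = the_inverse_mat A"
  have C: "C \<in> carrier_mat m m" "inverts_mat A C"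
    using someI_ex[OF ex] A unfolding C_def the_inverse_mat_def by auto
  have AC: "A * C = 1\<^sub>m m" using C A unfolding inverts_mat_def by simp
  have "Determinant.det A * Determinant.det C = 1" using det_mult[OF A C(1)] AC by simp
  then have "Determinant.det A \<noteq> 0" by auto
  moreover have "Determinant.det A = prod_list (diag_mat A)"
    by (rule det_lower_triangular[OF _ A]) (use lt A in \<open>auto simp: lower_triangular_mat_def\<close>)
  ultimately have diag: "\<And>i. i < m \<Longrightarrow> A $$ (i,i) \<noteq> 0"
    using A by (auto simp: diag_mat_def prod_list_zero_iff)
  have low: "\<And>i j. i < m \<Longrightarrow> i < j \<Longrightarrow> j < m \<Longrightarrow> C $$ (i,j) = 0"
  proof -
    fix i j
    show "i < m \<Longrightarrow> i < j \<Longrightarrow> j < m \<Longrightarrow> C $$ (i,j) = 0"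
    proof (induction i rule: less_induct)
      case (less i)
      have "0 = (A * C) $$ (i,j)" using AC less.prems by simp
      also have "\<dots> = (\<Sum>k<m. A $$ (i,k) * C $$ (k,j))"
        using A C less.prems by (simp add: scalar_prod_def lessThan_atLeast0)
      also have "\<dots> = (\<Sum>k\<in>{i}. A $$ (i,k) * C $$ (k,j))"
      proof (rule sum.mono_neutral_right, simp, use less.prems in simp, intro ballI)
        fix k assume k: "k \<in> {..<m} - {i}"
        show "A $$ (i,k) * C $$ (k,j) = 0"
        proof (cases "k < i")
          case True
          then show ?thesis using less.IH[of k] less.prems by simp
        next
          case False
          then have "A $$ (i,k) = 0" using k lt A less.prems unfolding lower_triangular_mat_def by auto
          then show ?thesis by simp
        qed
      qed
      finally show ?case using diag[of i] less.prems by simp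
    qed
  qed
  show ?thesis using C(1) AC low unfolding C_def by (meson order.strict_trans)
qed

lemma u_col_zero:
  assumes "\<nu> \<in> carrier_mat p p" "lower_triangular_mat \<nu>" "invertible_mat \<nu>" "a \<in> {1..p}" "i \<ge> a"
  shows "u_col p \<nu> a i = 0"
proof (cases "i < p")
  case True
  note I = inv_lower[OF assms(1-3)]
  have "u_col p \<nu> a i = scalar_prod (col (the_inverse_mat \<nu>) i) (unit_vec p (a - 1))"
    using True I unfolding u_col_def by (auto simp: mult_mat_vec_def)
  also have "\<dots> = the_inverse_mat \<nu> $$ (a - 1, i)" using assms True I by auto
  also have "\<dots> = 0" using I assms True by auto
  finally show ?thesis .
qed (simp add: u_col_def)

lemma u_row_zero:
  assumes "\<xi> \<in> carrier_mat q q" "lower_triangular_mat \<xi>" "invertible_mat \<xi>" "b \<in> {1..q}" "i \<ge> b"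
  shows "u_row q \<xi> b i = 0"
  using inv_lower[OF assms(1-3)] assms unfolding u_row_def by auto

lemma double_sum_extend:
  fixes f :: "nat \<Rightarrow> nat \<Rightarrow> complex"
  assumes "m \<le> K" "n \<le> K" "\<And>i j. i < K \<Longrightarrow> j < K \<Longrightarrow> (i \<ge> m \<or> j \<ge> n) \<Longrightarrow> f i j = 0"
  shows "(\<Sum>i<m. \<Sum>j<n. f i j) = (\<Sum>i<K. \<Sum>j<K. f i j)"
proof -
  have "(\<Sum>i<K. \<Sum>j<K. f i j) = (\<Sum>i<K. \<Sum>j<n. f i j)"
    by (rule sum.cong[OF refl], rule sum.mono_neutral_right) (use assms in auto)
  also have "\<dots> = (\<Sum>i<m. \<Sum>j<n. f i j)"
    by (rule sum.mono_neutral_right) (use assms in auto)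
  finally show ?thesis by simp
qed


theorem lemma2:
  fixes p q a b n :: nat
    and T :: "nat \<Rightarrow> nat \<Rightarrow> complex"
    and \<nu> \<xi> :: "complex mat"
  assumes "p \<ge> 1" and "q \<ge> 1"
    and "a \<in> {1..p}" and "b \<in> {1..q}"
    and "banded p q T"
    and "\<nu> \<in> carrier_mat p p" and "invertible_mat \<nu>" and "lower_triangular_mat \<nu>"
    and "\<xi> \<in> carrier_mat q q" and "invertible_mat \<xi>" and "lower_triangular_mat \<xi>"
  shows "(\<forall>N::nat. real N \<ge> Nscr p q a b n \<longrightarrow> int n \<le> dba p q b a N)
       \<and> (\<forall>N::nat. real N \<ge> Nscr p q a b n \<longrightarrow>
            vec (N + 1) (u_row q \<xi> b) \<bullet> ((trunc T N ^\<^sub>m n) *\<^sub>v vec (N + 1) (u_col p \<nu> a))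
              = moment p q T \<nu> \<xi> n a b)"
proof -
  have P: "real p > 0" "real q > 0" using assms by auto
  have a1: "a \<ge> 1" "a \<le> p" "b \<ge> 1" "b \<le> q" using assms by auto
  have H: "real n + 1 - ((2 - real a)/real p + (2 - real b)/real q) \<le> real N * (1/real p + 1/real q)"
    if "real N \<ge> Nscr p q a b n" for N
  proof -
    have s: "1/real p + 1/real q > 0" using P by (intro add_pos_pos) auto
    show ?thesis using that unfolding Nscr_def using pos_divide_le_eq[OF s] by simp
  qed
  have part1: "int n \<le> dba p q b a N" if "real N \<ge> Nscr p q a b n" for N
  proof -
    have "real n \<le> (real N + 2 - real a) / real p + (real N + 2 - real b) / real q - 1"
    proof -
      have g1: "(real N + 2 - real a)/real p = real N * (1/real p) + (2 - real a)/real p"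
        using P by (simp add: field_simps)
      have g2: "(real N + 2 - real b)/real q = real N * (1/real q) + (2 - real b)/real q"
        using P by (simp add: field_simps)
      show ?thesis using H[OF that] g1 g2 by (simp add: algebra_simps)
    qed
    also have "\<dots> \<le> real_of_int (dba p q b a N)"
      unfolding dba_def
      using le_of_int_ceiling[of "(real N + 2 - real a) / real p"]
        le_of_int_ceiling[of "(real N + 2 - real b) / real q"] by (simp only: of_int_diff of_int_add of_int_1)
    finally show ?thesis by linarith
  qed
  have natineq: "p*q*n + p*q + q*a + p*b \<le> N*(p+q) + 2*q + 2*p" if "real N \<ge> Nscr p q a b n" for N
  proof -
    have h: "real n + 1 - ((2 - real a)/real p + (2 - real b)/real q) \<le> real N * (1/real p + 1/real q)"
      using H[OF that] .
    have mm: "real p * real q * (real n + 1 - ((2 - real a)/real p + (2 - real b)/real q))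
       \<le> real p * real q * (real N * (1/real p + 1/real q))"
      using h P by (intro mult_left_mono) auto
    have "real p * real q * real n + real p * real q - 2 * real q + real q * real a
        - 2 * real p + real p * real b \<le> real N * (real p + real q)"
    proof -
      have f1: "real p * real q * ((2 - real a)/real p + (2 - real b)/real q) = real q * (2 - real a) + real p * (2 - real b)"
        using P by (simp add: field_simps)
      have f2: "real p * real q * (real N * (1/real p + 1/real q)) = real N * (real p + real q)"
        using P by (simp add: field_simps)
      show ?thesis using mm f1 f2 by (simp add: algebra_simps)
    qed
    then have "real (p*q*n + p*q + q*a + p*b) \<le> real (N*(p+q) + 2*q + 2*p)"
      by (simp add: algebra_simps)
    then show ?thesis by (simp only: of_nat_le_iff)
  qed
  have key: "(b - 1) + q*t \<le> N \<or> (a - 1) + p*(n-t) \<le> N"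
    if "real N \<ge> Nscr p q a b n" "t \<le> n" for N t
  proof (rule ccontr)
    assume "\<not> ?thesis"
    then have c1: "N + 1 \<le> (b - 1) + q*t" and c2: "N + 1 \<le> (a - 1) + p*(n-t)" by auto
    have m1: "p*(N+1) \<le> p*((b - 1) + q*t)" using c1 by (rule mult_left_mono) simp
    have m2: "q*(N+1) \<le> q*((a - 1) + p*(n-t))" using c2 by (rule mult_left_mono) simp
    have e1: "p*((b - 1) + q*t) + p = p*b + p*q*t" using a1(3)
      by (cases b) (simp_all add: algebra_simps)
    have e2: "q*((a - 1) + p*(n-t)) + q = q*a + p*q*(n-t)" using a1(1)
      by (cases a) (simp_all add: algebra_simps)
    have e3: "p*q*t + p*q*(n-t) = p*q*n" using that(2)
      by (metis add_mult_distrib2 le_add_diff_inverse)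
    have pq: "p*q \<ge> 1" using assms by simp
    have "p*(N+1) + q*(N+1) + p + q \<le> p*b + q*a + p*q*n"
      using m1 m2 e1 e2 e3 by linarith
    then show False using natineq[OF that(1)] pq by (simp add: algebra_simps)
  qed
  have part2: "scalar_prod (vec (N + 1) (u_row q \<xi> b)) ((trunc T N ^\<^sub>m n) *\<^sub>v vec (N + 1) (u_col p \<nu> a))
              = moment p q T \<nu> \<xi> n a b" if hN: "real N \<ge> Nscr p q a b n" for N
  proof -
    define M where "M = trunc T N ^\<^sub>m n"
    define f where "f = (\<lambda>i j. u_row q \<xi> b i * smat_pow T n i j * u_col p \<nu> a j)"
    define K where "K = N + p + q + 1"
    have MC: "M \<in> carrier_mat (N+1) (N+1)" unfolding M_def using trunc_carrier
      by (metis pow_mat_dim_square carrier_matI)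
    have ur0: "\<And>i. i \<ge> b \<Longrightarrow> u_row q \<xi> b i = 0"
      using u_row_zero[OF assms(9,11,10,4)] .
    have uc0: "\<And>j. j \<ge> a \<Longrightarrow> u_col p \<nu> a j = 0"
      using u_col_zero[OF assms(6,8,7,3)] .
    have cond: "\<forall>t\<le>n. i + q*t \<le> N \<or> j + p*(n-t) \<le> N" if "i < b" "j < a" for i j
    proof (intro allI impI)
      fix t assume "t \<le> n"
      from key[OF hN this] that show "i + q*t \<le> N \<or> j + p*(n-t) \<le> N" by auto
    qed
    have fz: "f i j = 0" if "i > N \<or> j > N" for i j
    proof (cases "i < b \<and> j < a")
      case True
      have c: "\<forall>t\<le>n. i + q*t \<le> N \<or> j + p*(n-t) \<le> N" using cond True by auto
      have "j > i + q * n \<or> i > j + p * n"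
      proof (cases "i > N")
        case True
        then show ?thesis using c[rule_format, of 0] by auto
      next
        case False
        then have "j > N" using that by auto
        then show ?thesis using c[rule_format, of n] by auto
      qed
      then show ?thesis unfolding f_def using pow_band[OF assms(5)] by simp
    next
      case False
      then show ?thesis unfolding f_def using ur0 uc0 by (auto simp: not_less)
    qed
    have "scalar_prod (vec (N + 1) (u_row q \<xi> b)) (M *\<^sub>v vec (N + 1) (u_col p \<nu> a))
        = (\<Sum>i<N+1. u_row q \<xi> b i * (\<Sum>j<N+1. M $$ (i,j) * u_col p \<nu> a j))"
      using MC by (simp add: scalar_prod_def mult_mat_vec_def lessThan_atLeast0)
    also have "\<dots> = (\<Sum>i<N+1. \<Sum>j<N+1. f i j)"
      unfolding sum_distrib_left
    proof (intro sum.cong refl)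
      fix i j assume i: "i \<in> {..<N+1}" and j: "j \<in> {..<N+1}"
      show "u_row q \<xi> b i * (M $$ (i, j) * u_col p \<nu> a j) = f i j"
      proof (cases "i < b \<and> j < a")
        case True
        have "M $$ (i,j) = smat_pow T n i j" unfolding M_def
          using trunc_pow_entry[OF assms(5)] i j cond[of i j] True by auto
        then show ?thesis unfolding f_def by simp
      next
        case False
        then show ?thesis unfolding f_def using ur0 uc0 by (auto simp: not_less)
      qed
    qed
    also have "\<dots> = (\<Sum>i<K. \<Sum>j<K. f i j)"
      by (rule double_sum_extend) (use fz in \<open>auto simp: K_def\<close>)
    also have "\<dots> = (\<Sum>i<q. \<Sum>j<p. f i j)"
      by (rule double_sum_extend[symmetric]) (auto simp: K_def f_def u_row_def u_col_def)
    also have "\<dots> = moment p q T \<nu> \<xi> n a b" unfolding moment_def f_def ..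
    finally show ?thesis unfolding M_def .
  qed
  show ?thesis using part1 part2 by blast
qed

end
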